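(* In the Mahi-Mahi protocol, if a leader slot $s$ is decided (i.e., classified as commit or skip) at two honest validators $v$ and $v'$, then either both validators commit $s$, or both validators skip $s$.
   Context: Setting: $n=3f+1$ validators, at most $f$ Byzantine; honest validators create exactly one block per round, Byzantine ones may equivocate. Each valid block of round $r$ references (parents) at least $2f+1$ blocks of round $r-1$; each validator has a local DAG of valid blocks containing a block only with all its causal history. There is a path from $b$ to $b'$ if $b'$ is reached from $b$ along parent references. A block $b$ of round $r'$ is a vote for a block $L$ of round $r<r'$ with author $a$ if the first block with author $a$ and round $r$ met in the deterministic depth-first search from $b$ is $L$. With wave length $w\in\{4,5\}$, a block of round $r+w-1$ is a certificate for a block $L$ of round $r$ if at least $2f+1$ of its parents are votes for $L$. Leader slots are pairs (validator, round) chosen by a global perfect common coin, identical for all validators and totally ordered by round then coin order. A validator classifies slots as commit (of a block), skip or undecided: direct skip if its local DAG has $2f+1$ round-$(r+w-2)$ blocks that are not votes for the block $L$ of the slot; direct commit of $L$ if it has $2f+1$ round-$(r+w-1)$ certificates for $L$; otherwise the indirect rule: the anchor is the first slot (in slot order) of round $>r+w-1$ not classified as skip; if the anchor is committed with block $A$, commit $L$ if some certificate $c$ for $L$ has a path from $A$ to $c$, else skip; if the anchor is undecided, the slot is undecided. *)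

theory Defs
  imports Main
begin

text \<open>A block records its author, its round, the ordered list of its parent
  blocks (the references; their order is the order used by the deterministic
  depth-first search) and an arbitrary payload (so that a Byzantine author may
  create several different blocks for the same round, i.e. equivocate).\<close>

datatype block = Block (author: nat) (rnd: nat) (parents: "block list") (payload: nat)

fun valid :: "nat \<Rightarrow> nat \<Rightarrow> block \<Rightarrow> bool" where
  "valid n f (Block a r ps p) =
     (a < n \<and>
      (r = 0 \<longrightarrow> ps = []) \<and>
      (0 < r \<longrightarrow> list_all (\<lambda>q. rnd q = r - 1) ps \<and> list_all (valid n f) ps
                 \<and> 2 * f + 1 \<le> card (author ` set ps)))"

inductive path :: "block \<Rightarrow> block \<Rightarrow> bool" where
  path_refl: "path b b"
| path_step: "c \<in> set (parents b) \<Longrightarrow> path c b' \<Longrightarrow> path b b'"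

fun fsome :: "'a option list \<Rightarrow> 'a option" where
  "fsome [] = None"
| "fsome (Some x # _) = Some x"
| "fsome (None # xs) = fsome xs"

fun dfs_find :: "nat \<Rightarrow> nat \<Rightarrow> block \<Rightarrow> block option" where
  "dfs_find a r (Block au rd ps p) =
     (if au = a \<and> rd = r then Some (Block au rd ps p)
      else fsome (map (dfs_find a r) ps))"

definition is_vote :: "block \<Rightarrow> block \<Rightarrow> bool" where
  "is_vote b L \<longleftrightarrow> rnd L < rnd b \<and> dfs_find (author L) (rnd L) b = Some L"

definition is_cert :: "nat \<Rightarrow> nat \<Rightarrow> block \<Rightarrow> block \<Rightarrow> bool" where
  "is_cert f w c L \<longleftrightarrow> rnd c = rnd L + w - 1 \<and>
     2 * f + 1 \<le> card (author ` {q \<in> set (parents c). is_vote q L})"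

datatype decision = Commit block | Skip | Undecided

type_synonym slot = "nat \<times> nat"  (* (leader validator, round) *)

definition direct_skip :: "nat \<Rightarrow> nat \<Rightarrow> block set \<Rightarrow> slot \<Rightarrow> bool" where
  "direct_skip f w D s \<longleftrightarrow>
     2 * f + 1 \<le> card (author ` {b \<in> D. rnd b = snd s + w - 2 \<and>
        (\<forall>L. author L = fst s \<and> rnd L = snd s \<longrightarrow> \<not> is_vote b L)})"

definition direct_commit :: "nat \<Rightarrow> nat \<Rightarrow> block set \<Rightarrow> slot \<Rightarrow> block \<Rightarrow> bool" where
  "direct_commit f w D s L \<longleftrightarrow> author L = fst s \<and> rnd L = snd s \<and>
     2 * f + 1 \<le> card (author ` {c \<in> D. is_cert f w c L})"

definition max_round :: "block set \<Rightarrow> nat" where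
  "max_round D = Max (insert 0 (rnd ` D))"

text \<open>Slots of rounds > r+w-1 (up to the highest round of the local DAG), in
  slot order: by round, then by the coin order of the leaders of that round.\<close>

definition later_slots :: "(nat \<Rightarrow> nat list) \<Rightarrow> nat \<Rightarrow> block set \<Rightarrow> slot \<Rightarrow> slot list" where
  "later_slots leaders w D s =
     concat (map (\<lambda>r'. map (\<lambda>a. (a, r')) (leaders r')) [snd s + w ..< Suc (max_round D)])"

text \<open>Classification with a recursion bound k (the indirect rule recurses on
  slots of strictly higher rounds; a bound of max_round D + 1 is never reached).\<close>

fun cls :: "nat \<Rightarrow> nat \<Rightarrow> (nat \<Rightarrow> nat list) \<Rightarrow> block set \<Rightarrow> nat \<Rightarrow> slot \<Rightarrow> decision" where
  "cls f w leaders D 0 s = Undecided"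
| "cls f w leaders D (Suc k) s =
     (if direct_skip f w D s then Skip
      else if (\<exists>L. direct_commit f w D s L) then Commit (SOME L. direct_commit f w D s L)
      else (case find (\<lambda>s'. cls f w leaders D k s' \<noteq> Skip) (later_slots leaders w D s) of
              None \<Rightarrow> Undecided
            | Some anc \<Rightarrow>
                (case cls f w leaders D k anc of
                   Commit A \<Rightarrow>
                     (if (\<exists>L c. author L = fst s \<and> rnd L = snd s \<and> is_cert f w c L \<and> path A c)
                      then Commit (SOME L. \<exists>c. author L = fst s \<and> rnd L = snd s \<and> is_cert f w c L \<and> path A c)
                      else Skip)
                 | _ \<Rightarrow> Undecided)))"

definition classify :: "nat \<Rightarrow> nat \<Rightarrow> (nat \<Rightarrow> nat list) \<Rightarrow> block set \<Rightarrow> slot \<Rightarrow> decision" where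
  "classify f w leaders D s = cls f w leaders D (Suc (max_round D)) s"

definition decided :: "decision \<Rightarrow> bool" where
  "decided d \<longleftrightarrow> d \<noteq> Undecided"

end

theory Submission
  imports Defs
begin


lemma fsome_in: "fsome xs = Some x \<Longrightarrow> Some x \<in> set xs"
  by (induction xs rule: fsome.induct) auto

lemma dfs_path: "dfs_find a r q = Some L \<Longrightarrow> path q L"
proof (induction a r q rule: dfs_find.induct)
  case (1 a r au rd ps p)
  show ?case
  proof (cases "au = a \<and> rd = r")
    case True
    then show ?thesis using 1(2) by (auto intro: path_refl)
  next
    case False
    then have "fsome (map (dfs_find a r) ps) = Some L" using 1(2) by (auto split: if_splits)
    then have "Some L \<in> set (map (dfs_find a r) ps)" by (rule fsome_in)
    then obtain q where q: "q \<in> set ps" "dfs_find a r q = Some L" by auto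
    then have "path q L" using 1(1) False by blast
    then show ?thesis using q(1) by (auto intro: path_step)
  qed
qed

lemma find_prefix:
  assumes "find P xs = Some x" "find Q (xs @ zs) = Some y"
  shows "x = y \<or> \<not> Q x \<or> \<not> P y"
proof -
  from assms(1) obtain i where i: "i < length xs" "P (xs!i)" "x = xs!i" "\<forall>j<i. \<not> P (xs!j)"
    by (auto simp: find_Some_iff)
  from assms(2) obtain k where k: "k < length (xs@zs)" "Q ((xs@zs)!k)" "y = (xs@zs)!k"
      "\<forall>j<k. \<not> Q ((xs@zs)!j)"
    by (auto simp: find_Some_iff)
  show ?thesis
  proof (cases "i < k")
    case True
    then have "\<not> Q ((xs@zs)!i)" using k(4) by blast
    then show ?thesis using i by (simp add: nth_append)
  next
    case False
    show ?thesis
    proof (cases "i = k")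
      case True then show ?thesis using i k by (simp add: nth_append)
    next
      case F2: False
      with False have "k < i" by simp
      then have "\<not> P (xs!k)" using i(4) by blast
      moreover have "y = xs!k" using k(3) \<open>k < i\<close> i(1) by (simp add: nth_append)
      ultimately show ?thesis by simp
    qed
  qed
qed

lemma concat_upt_prefix:
  assumes "a \<le> b"
  shows "\<exists>zs. concat (map F [i..<b]) = concat (map F [i..<a]) @ zs"
proof (cases "i \<le> a")
  case True
  have "[i..<b] = [i..<a] @ [a..<b]"
    using upt_add_eq_append[OF True, of "b - a"] assms by simp
  then show ?thesis by auto
next
  case False then show ?thesis by simp
qed

lemma later_slots_prefix:
  "\<exists>zs. later_slots leaders w D2 s = later_slots leaders w D1 s @ zs \<or>
        later_slots leaders w D1 s = later_slots leaders w D2 s @ zs"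
proof (cases "max_round D1 \<le> max_round D2")
  case True
  then obtain zs where "concat (map (\<lambda>r'. map (\<lambda>a. (a, r')) (leaders r')) [snd s + w..<Suc (max_round D2)])
     = concat (map (\<lambda>r'. map (\<lambda>a. (a, r')) (leaders r')) [snd s + w..<Suc (max_round D1)]) @ zs"
    using concat_upt_prefix[of "Suc (max_round D1)" "Suc (max_round D2)"] by (auto simp del: upt_Suc)
  then show ?thesis unfolding later_slots_def by blast
next
  case False
  then obtain zs where "concat (map (\<lambda>r'. map (\<lambda>a. (a, r')) (leaders r')) [snd s + w..<Suc (max_round D1)])
     = concat (map (\<lambda>r'. map (\<lambda>a. (a, r')) (leaders r')) [snd s + w..<Suc (max_round D2)]) @ zs"
    using concat_upt_prefix[of "Suc (max_round D2)" "Suc (max_round D1)"] by (auto simp del: upt_Suc)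
  then show ?thesis unfolding later_slots_def by blast
qed

lemma later_slots_round: "anc \<in> set (later_slots leaders w D s) \<Longrightarrow> snd s + w \<le> snd anc"
  unfolding later_slots_def by auto

definition agree :: "decision \<Rightarrow> decision \<Rightarrow> bool" where
  "agree x y \<longleftrightarrow> (\<exists>L. x = Commit L \<and> y = Commit L) \<or> (x = Skip \<and> y = Skip)"

lemma agree_sym: "agree x y \<Longrightarrow> agree y x"
  unfolding agree_def by auto

lemma indirect_cases:
  assumes "\<not> direct_skip f w D s" "\<not> (\<exists>L. direct_commit f w D s L)"
    "decided (cls f w leaders D (Suc k) s)"
  shows "\<exists>anc A. find (\<lambda>s'. cls f w leaders D k s' \<noteq> Skip) (later_slots leaders w D s) = Some anc
     \<and> cls f w leaders D k anc = Commit A \<and>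
     cls f w leaders D (Suc k) s =
       (if (\<exists>L c. author L = fst s \<and> rnd L = snd s \<and> is_cert f w c L \<and> path A c)
        then Commit (SOME L. \<exists>c. author L = fst s \<and> rnd L = snd s \<and> is_cert f w c L \<and> path A c)
        else Skip)"
proof -
  let ?fd = "find (\<lambda>s'. cls f w leaders D k s' \<noteq> Skip) (later_slots leaders w D s)"
  have e: "cls f w leaders D (Suc k) s = (case ?fd of None \<Rightarrow> Undecided
            | Some anc \<Rightarrow>
                (case cls f w leaders D k anc of
                   Commit A \<Rightarrow>
                     (if (\<exists>L c. author L = fst s \<and> rnd L = snd s \<and> is_cert f w c L \<and> path A c)
                      then Commit (SOME L. \<exists>c. author L = fst s \<and> rnd L = snd s \<and> is_cert f w c L \<and> path A c)
                      else Skip)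
                 | _ \<Rightarrow> Undecided))"
  proof -
    have nd: "\<not> (\<exists>L. direct_commit f w D s L)" using assms(2) .
    show ?thesis by (simp only: cls.simps if_not_P[OF assms(1)] if_not_P[OF nd])
  qed
  show ?thesis
  proof (cases ?fd)
    case None then show ?thesis using assms(3) e by (simp add: decided_def)
  next
    case (Some anc)
    show ?thesis
    proof (cases "cls f w leaders D k anc")
      case (Commit A) then show ?thesis using Some e by auto
    next
      case Skip then show ?thesis using Some e assms(3) by (simp add: decided_def)
    next
      case Undecided then show ?thesis using Some e assms(3) by (simp add: decided_def)
    qed
  qed
qed



locale setting =
  fixes n f w :: nat and H :: "nat set" and D :: "nat \<Rightarrow> block set"
  assumes n_def: "n = 3 * f + 1"
    and wave: "w \<in> {4, 5}"
    and hv: "H \<subseteq> {..<n}"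
    and byz: "card ({..<n} - H) \<le> f"
    and dags: "\<forall>u\<in>H. finite (D u) \<and> (\<forall>b\<in>D u. valid n f b \<and> set (parents b) \<subseteq> D u)"
    and huniq: "\<forall>b\<in>(\<Union>u\<in>H. D u). \<forall>b'\<in>(\<Union>u\<in>H. D u).
                  author b \<in> H \<and> author b' = author b \<and> rnd b' = rnd b \<longrightarrow> b = b'"
begin

lemma w_ge: "4 \<le> w" using wave by auto

lemma quorum:
  assumes "X \<subseteq> {..<n}" "Y \<subseteq> {..<n}" "2*f+1 \<le> card X" "2*f+1 \<le> card Y"
  shows "\<exists>h\<in>H. h \<in> X \<and> h \<in> Y"
proof (rule ccontr)
  assume nh: "\<not> ?thesis"
  have fX: "finite X" "finite Y" using assms(1,2) finite_subset by blast+
  have "card (X \<union> Y) + card (X \<inter> Y) = card X + card Y" using card_Un_Int[OF fX] by simp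
  moreover have "card (X \<union> Y) \<le> n" using card_mono[of "{..<n}" "X \<union> Y"] assms(1,2) by auto
  ultimately have "f + 1 \<le> card (X \<inter> Y)" using assms(3,4) n_def by linarith
  moreover have "X \<inter> Y \<subseteq> {..<n} - H" using nh assms(1) by blast
  then have "card (X \<inter> Y) \<le> f" using card_mono[of "{..<n} - H" "X \<inter> Y"] byz by auto
  ultimately show False by simp
qed

lemma inD: "u \<in> H \<Longrightarrow> b \<in> D u \<Longrightarrow> valid n f b \<and> set (parents b) \<subseteq> D u"
  using dags by blast

lemma finD: "u \<in> H \<Longrightarrow> finite (D u)"
  using dags by blast

lemma uniq: "u \<in> H \<Longrightarrow> u' \<in> H \<Longrightarrow> b \<in> D u \<Longrightarrow> b' \<in> D u' \<Longrightarrow> author b \<in> H \<Longrightarrow>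
   author b' = author b \<Longrightarrow> rnd b' = rnd b \<Longrightarrow> b = b'"
  using huniq by blast

lemma valid_author: "valid n f b \<Longrightarrow> author b < n"
  by (cases b) auto

lemma valid_parents: "valid n f b \<Longrightarrow> 0 < rnd b \<Longrightarrow>
   (\<forall>q\<in>set (parents b). rnd q = rnd b - 1) \<and> 2*f+1 \<le> card (author ` set (parents b))"
  by (cases b) (auto simp: list_all_iff)

lemma authors_sub: "u \<in> H \<Longrightarrow> S \<subseteq> D u \<Longrightarrow> author ` S \<subseteq> {..<n}"
  using inD valid_author by blast

lemma path_closed: "path b b' \<Longrightarrow> u \<in> H \<Longrightarrow> b \<in> D u \<Longrightarrow> b' \<in> D u"
proof (induction rule: path.induct)
  case (path_refl b) then show ?case by simp
next
  case (path_step c b b')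
  then have "c \<in> D u" using inD by blast
  then show ?case using path_step by blast
qed

lemma vote_in: "u \<in> H \<Longrightarrow> q \<in> D u \<Longrightarrow> is_vote q L \<Longrightarrow> L \<in> D u"
  unfolding is_vote_def using dfs_path path_closed by blast

lemma cert_votes_sub: "u \<in> H \<Longrightarrow> c \<in> D u \<Longrightarrow> {q \<in> set (parents c). is_vote q L} \<subseteq> D u"
  using inD by blast

lemma cert_round: "u \<in> H \<Longrightarrow> c \<in> D u \<Longrightarrow> is_cert f w c L \<Longrightarrow> q \<in> set (parents c) \<Longrightarrow>
   rnd q = rnd L + w - 2"
proof -
  assume a: "u \<in> H" "c \<in> D u" "is_cert f w c L" "q \<in> set (parents c)"
  have r: "rnd c = rnd L + w - 1" using a(3) unfolding is_cert_def by simp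
  then have "0 < rnd c" using w_ge by simp
  moreover have "valid n f c" using inD[OF a(1,2)] by blast
  ultimately have "rnd q = rnd c - 1" using valid_parents a(4) by blast
  then show ?thesis using r w_ge by simp
qed

lemma cert_L_in: "u \<in> H \<Longrightarrow> c \<in> D u \<Longrightarrow> is_cert f w c L \<Longrightarrow> L \<in> D u"
proof -
  assume a: "u \<in> H" "c \<in> D u" "is_cert f w c L"
  have "0 < card (author ` {q \<in> set (parents c). is_vote q L})"
    using a(3) unfolding is_cert_def by simp
  then have "author ` {q \<in> set (parents c). is_vote q L} \<noteq> {}" by (metis card.empty less_irrefl)
  then obtain q where "q \<in> set (parents c)" "is_vote q L" by blast
  moreover have "set (parents c) \<subseteq> D u" using inD[OF a(1,2)] by blast
  ultimately show ?thesis using vote_in[OF a(1)] by blast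
qed

lemma cert_unique:
  assumes "u \<in> H" "u' \<in> H" "c \<in> D u" "c' \<in> D u'" "is_cert f w c L" "is_cert f w c' L'"
    "author L = author L'" "rnd L = rnd L'"
  shows "L = L'"
proof -
  let ?X = "author ` {q \<in> set (parents c). is_vote q L}"
  let ?Y = "author ` {q \<in> set (parents c'). is_vote q L'}"
  have "\<exists>h\<in>H. h \<in> ?X \<and> h \<in> ?Y"
    by (rule quorum[OF authors_sub[OF assms(1) cert_votes_sub[OF assms(1,3)]]
          authors_sub[OF assms(2) cert_votes_sub[OF assms(2,4)]]])
       (use assms(5,6) in \<open>simp_all add: is_cert_def\<close>)
  then obtain h where h: "h \<in> H" "h \<in> ?X" "h \<in> ?Y" by blast
  from h(2) obtain q where q1: "q \<in> set (parents c)" "is_vote q L" "author q = h" by blast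
  from h(3) obtain q' where q2: "q' \<in> set (parents c')" "is_vote q' L'" "author q' = h" by blast
  have q: "q \<in> set (parents c)" "is_vote q L" "q' \<in> set (parents c')" "is_vote q' L'"
    "author q \<in> H" "author q' = author q" using q1 q2 h by auto
  have r1: "rnd q = rnd L + w - 2" by (rule cert_round[OF assms(1,3,5) q(1)])
  have r2: "rnd q' = rnd L' + w - 2" by (rule cert_round[OF assms(2,4,6) q(3)])
  have i1: "q \<in> D u" using inD[OF assms(1,3)] q(1) by blast
  have i2: "q' \<in> D u'" using inD[OF assms(2,4)] q(3) by blast
  have rr: "rnd q' = rnd q" using r1 r2 assms(8) by simp
  have "q = q'" by (rule uniq[OF assms(1,2) i1 i2 q(5,6) rr])
  have d1: "dfs_find (author L) (rnd L) q = Some L" using q(2) unfolding is_vote_def by blast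
  have d2: "dfs_find (author L') (rnd L') q' = Some L'" using q(4) unfolding is_vote_def by blast
  have d3: "dfs_find (author L) (rnd L) q' = Some L'" unfolding assms(7,8) by (rule d2)
  from d1 d3 \<open>q = q'\<close> show ?thesis by (metis option.inject)
qed

lemma skip_cert:
  assumes "u \<in> H" "u' \<in> H" "direct_skip f w (D u) s" "c \<in> D u'" "is_cert f w c L"
    "author L = fst s" "rnd L = snd s"
  shows False
proof -
  let ?S = "{b \<in> D u. rnd b = snd s + w - 2 \<and>
        (\<forall>L. author L = fst s \<and> rnd L = snd s \<longrightarrow> \<not> is_vote b L)}"
  let ?X = "author ` ?S"
  let ?Y = "author ` {q \<in> set (parents c). is_vote q L}"
  have "\<exists>h\<in>H. h \<in> ?X \<and> h \<in> ?Y"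
    by (rule quorum[OF authors_sub[OF assms(1), of ?S]
          authors_sub[OF assms(2) cert_votes_sub[OF assms(2,4)]]])
       (use assms(3,5) in \<open>simp_all add: is_cert_def direct_skip_def\<close>)
  then obtain h where h: "h \<in> H" "h \<in> ?X" "h \<in> ?Y" by blast
  from h(2) obtain q where q1: "q \<in> ?S" "author q = h" by blast
  from h(3) obtain q' where q2: "q' \<in> set (parents c)" "is_vote q' L" "author q' = h" by blast
  have q: "q \<in> ?S" "q' \<in> set (parents c)" "is_vote q' L"
    "author q \<in> H" "author q' = author q" using q1 q2 h by auto
  have "rnd q' = rnd L + w - 2" by (rule cert_round[OF assms(2,4,5) q(2)])
  moreover have "q' \<in> D u'" using inD[OF assms(2,4)] q(2) by blast
  moreover have "rnd q = snd s + w - 2" "q \<in> D u" using q(1) by auto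
  ultimately have rr: "rnd q' = rnd q" "q' \<in> D u'" "q \<in> D u" using assms(7) by simp_all
  have "q = q'" by (rule uniq[OF assms(1,2) rr(3,2) q(4,5) rr(1)])
  have "\<forall>L. author L = fst s \<and> rnd L = snd s \<longrightarrow> \<not> is_vote q L" using q(1) by blast
  then have "\<not> is_vote q L" using assms(6,7) by blast
  then show False using \<open>q = q'\<close> q(3) by simp
qed

lemma reach:
  assumes "u \<in> H" "u' \<in> H" "2*f+1 \<le> card (author ` {c \<in> D u. is_cert f w c L})"
  shows "b \<in> D u' \<Longrightarrow> rnd b = rnd L + w + d \<Longrightarrow> \<exists>c. c \<in> D u' \<and> is_cert f w c L \<and> path b c"
proof (induction d arbitrary: b)
  case 0
  have vb: "valid n f b" "set (parents b) \<subseteq> D u'" using inD assms(2) 0(1) by blast+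
  have pos: "0 < rnd b" using 0(2) w_ge by simp
  have "\<exists>h\<in>H. h \<in> author ` set (parents b) \<and> h \<in> author ` {c \<in> D u. is_cert f w c L}"
    by (rule quorum[OF authors_sub[OF assms(2) vb(2)] authors_sub[OF assms(1), of "{c \<in> D u. is_cert f w c L}"]])
      (use valid_parents[OF vb(1) pos] assms(3) in simp_all)
  then obtain h where h: "h \<in> H" "h \<in> author ` set (parents b)" "h \<in> author ` {c \<in> D u. is_cert f w c L}" by blast
  from h(2) obtain q where q1: "q \<in> set (parents b)" "author q = h" by blast
  from h(3) obtain c where q2: "c \<in> D u" "is_cert f w c L" "author c = h" by blast
  have q: "q \<in> set (parents b)" "c \<in> D u" "is_cert f w c L" "author q \<in> H"
    "author c = author q" using q1 q2 h by auto
  have r1: "rnd q = rnd b - 1" using valid_parents[OF vb(1) pos] q(1) by blast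
  have r2: "rnd c = rnd L + w - 1" using q(3) unfolding is_cert_def by simp
  have qi: "q \<in> D u'" using q(1) vb(2) by blast
  have rr: "rnd c = rnd q" using r1 r2 0(2) by simp
  have "q = c" by (rule uniq[OF assms(2,1) qi q(2,4,5) rr])
  have "path b q" by (rule path_step[OF q(1) path_refl])
  then show ?case using \<open>q = c\<close> qi q(3) by blast
next
  case (Suc d)
  have vb: "valid n f b" "set (parents b) \<subseteq> D u'" using inD assms(2) Suc(2) by blast+
  have pos: "0 < rnd b" using Suc(3) by simp
  have "set (parents b) \<noteq> {}" using valid_parents[OF vb(1) pos] by auto
  then obtain q where q: "q \<in> set (parents b)" by (meson ex_in_conv)
  have "rnd q = rnd L + w + d" using valid_parents[OF vb(1) pos] q Suc(3) by auto
  then obtain c where "c \<in> D u'" "is_cert f w c L" "path q c" using Suc(1) q vb by blast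
  then show ?case using path_step[OF q] by blast
qed

lemma reach': "u \<in> H \<Longrightarrow> u' \<in> H \<Longrightarrow> 2*f+1 \<le> card (author ` {c \<in> D u. is_cert f w c L}) \<Longrightarrow>
   b \<in> D u' \<Longrightarrow> rnd L + w \<le> rnd b \<Longrightarrow> \<exists>c. c \<in> D u' \<and> is_cert f w c L \<and> path b c"
  using reach[of u u' L b "rnd b - (rnd L + w)"] by simp

lemma dc_cert: "direct_commit f w (D u) s L \<Longrightarrow> \<exists>c. c \<in> D u \<and> is_cert f w c L"
proof -
  assume a: "direct_commit f w (D u) s L"
  have "0 < card (author ` {c \<in> D u. is_cert f w c L})"
    using a unfolding direct_commit_def by simp
  then have "author ` {c \<in> D u. is_cert f w c L} \<noteq> {}" by (metis card.empty less_irrefl)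
  then show ?thesis by blast
qed

lemma commit_in:
  "u \<in> H \<Longrightarrow> cls f w leaders (D u) k s = Commit A \<Longrightarrow> A \<in> D u \<and> author A = fst s \<and> rnd A = snd s"
proof (induction k arbitrary: s A)
  case 0 then show ?case by simp
next
  case (Suc k)
  note IH = Suc(1) and u = Suc(2) and cm = Suc(3)
  show ?case
  proof (cases "direct_skip f w (D u) s")
    case True then show ?thesis using cm by simp
  next
    case nds: False
    show ?thesis
    proof (cases "\<exists>L. direct_commit f w (D u) s L")
      case True
      then have A: "A = (SOME L. direct_commit f w (D u) s L)" using cm nds by simp
      have dc: "direct_commit f w (D u) s A" unfolding A by (rule someI_ex[OF True])
      then obtain c where "c \<in> D u" "is_cert f w c A" using dc_cert by blast
      then show ?thesis using cert_L_in u dc unfolding direct_commit_def by blast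
    next
      case False
      have "decided (cls f w leaders (D u) (Suc k) s)" using cm by (simp add: decided_def)
      from indirect_cases[OF nds False this] obtain anc A0 where
        an: "cls f w leaders (D u) k anc = Commit A0" and
        e: "cls f w leaders (D u) (Suc k) s =
       (if (\<exists>L c. author L = fst s \<and> rnd L = snd s \<and> is_cert f w c L \<and> path A0 c)
        then Commit (SOME L. \<exists>c. author L = fst s \<and> rnd L = snd s \<and> is_cert f w c L \<and> path A0 c)
        else Skip)" by blast
      have A0: "A0 \<in> D u" using IH[OF u an] by blast
      have ex: "\<exists>L c. author L = fst s \<and> rnd L = snd s \<and> is_cert f w c L \<and> path A0 c"
        using e cm by (auto split: if_splits)
      then have A: "A = (SOME L. \<exists>c. author L = fst s \<and> rnd L = snd s \<and> is_cert f w c L \<and> path A0 c)"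
        using e cm by simp
      have "\<exists>c. author A = fst s \<and> rnd A = snd s \<and> is_cert f w c A \<and> path A0 c"
        unfolding A using someI_ex[OF ex] .
      then obtain c where c: "author A = fst s" "rnd A = snd s" "is_cert f w c A" "path A0 c" by blast
      have "c \<in> D u" using path_closed c(4) u A0 by blast
      then show ?thesis using cert_L_in u c by blast
    qed
  qed
qed

end



lemma agree_refl: "decided x \<Longrightarrow> agree x x"
  by (cases x) (auto simp: agree_def decided_def)

lemma find_in: "find P xs = Some x \<Longrightarrow> x \<in> set xs"
  by (auto simp: find_Some_iff)

context setting
begin

lemma commit_cert:
  assumes u: "u \<in> H" and cm: "cls f w leaders (D u) (Suc k) s = Commit L"
  shows "\<exists>c. c \<in> D u \<and> is_cert f w c L \<and> author L = fst s \<and> rnd L = snd s"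
proof (cases "direct_skip f w (D u) s")
  case True then show ?thesis using cm by simp
next
  case nds: False
  show ?thesis
  proof (cases "\<exists>L. direct_commit f w (D u) s L")
    case True
    then have A: "L = (SOME L. direct_commit f w (D u) s L)" using cm nds by simp
    have dc: "direct_commit f w (D u) s L" unfolding A by (rule someI_ex[OF True])
    then obtain c where "c \<in> D u" "is_cert f w c L" using dc_cert by blast
    then show ?thesis using dc unfolding direct_commit_def by blast
  next
    case False
    have "decided (cls f w leaders (D u) (Suc k) s)" using cm by (simp add: decided_def)
    from indirect_cases[OF nds False this] obtain anc A0 where
      an: "cls f w leaders (D u) k anc = Commit A0" and
      e: "cls f w leaders (D u) (Suc k) s =
     (if (\<exists>L c. author L = fst s \<and> rnd L = snd s \<and> is_cert f w c L \<and> path A0 c)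
      then Commit (SOME L. \<exists>c. author L = fst s \<and> rnd L = snd s \<and> is_cert f w c L \<and> path A0 c)
      else Skip)" by blast
    have A0: "A0 \<in> D u" using commit_in[OF u an] by blast
    have ex: "\<exists>L c. author L = fst s \<and> rnd L = snd s \<and> is_cert f w c L \<and> path A0 c"
      using e cm by (auto split: if_splits)
    then have A: "L = (SOME L. \<exists>c. author L = fst s \<and> rnd L = snd s \<and> is_cert f w c L \<and> path A0 c)"
      using e cm by simp
    have "\<exists>c. author L = fst s \<and> rnd L = snd s \<and> is_cert f w c L \<and> path A0 c"
      unfolding A using someI_ex[OF ex] .
    then obtain c where c: "author L = fst s" "rnd L = snd s" "is_cert f w c L" "path A0 c" by blast
    have "c \<in> D u" using path_closed c(4) u A0 by blast
    then show ?thesis using c by blast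
  qed
qed

lemma one_direct:
  assumes u: "u \<in> H" "u' \<in> H"
    and dir: "direct_skip f w (D u) s \<or> (\<exists>L. direct_commit f w (D u) s L)"
    and dec: "decided (cls f w leaders (D u') (Suc k2) s)"
  shows "agree (cls f w leaders (D u) (Suc k1) s) (cls f w leaders (D u') (Suc k2) s)"
proof (cases "direct_skip f w (D u) s")
  case True
  then have x: "cls f w leaders (D u) (Suc k1) s = Skip" by simp
  show ?thesis
  proof (cases "cls f w leaders (D u') (Suc k2) s")
    case (Commit L)
    from commit_cert[OF u(2) Commit] obtain c where
      "c \<in> D u'" "is_cert f w c L" "author L = fst s" "rnd L = snd s" by blast
    then have False using skip_cert[OF u True] by blast
    then show ?thesis ..
  next
    case Skip then show ?thesis using x by (simp add: agree_def)
  next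
    case Undecided then show ?thesis using dec by (simp add: decided_def)
  qed
next
  case nds: False
  then have dc1: "\<exists>L. direct_commit f w (D u) s L" using dir by blast
  define L1 where "L1 = (SOME L. direct_commit f w (D u) s L)"
  have x: "cls f w leaders (D u) (Suc k1) s = Commit L1" using nds dc1 unfolding L1_def by simp
  have dcL1: "direct_commit f w (D u) s L1" unfolding L1_def by (rule someI_ex[OF dc1])
  then obtain c1 where c1: "c1 \<in> D u" "is_cert f w c1 L1" using dc_cert by blast
  have aL1: "author L1 = fst s" "rnd L1 = snd s" using dcL1 unfolding direct_commit_def by auto
  show ?thesis
  proof (cases "cls f w leaders (D u') (Suc k2) s")
    case (Commit L)
    from commit_cert[OF u(2) Commit] obtain c where
      c: "c \<in> D u'" "is_cert f w c L" "author L = fst s" "rnd L = snd s" by blast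
    have "L1 = L" by (rule cert_unique[OF u c1(1) c(1) c1(2) c(2)]) (use aL1 c in simp_all)
    then show ?thesis using x Commit by (simp add: agree_def)
  next
    case Undecided then show ?thesis using dec by (simp add: decided_def)
  next
    case Skip
    have False
    proof (cases "direct_skip f w (D u') s")
      case True
      show False by (rule skip_cert[OF u(2,1) True c1 aL1])
    next
      case nds2: False
      show False
      proof (cases "\<exists>L. direct_commit f w (D u') s L")
        case True then show False using Skip nds2 by simp
      next
        case False
        from indirect_cases[OF nds2 False dec] obtain anc A where
          fd: "find (\<lambda>s'. cls f w leaders (D u') k2 s' \<noteq> Skip) (later_slots leaders w (D u') s) = Some anc"
          and an: "cls f w leaders (D u') k2 anc = Commit A" and
          e: "cls f w leaders (D u') (Suc k2) s =
         (if (\<exists>L c. author L = fst s \<and> rnd L = snd s \<and> is_cert f w c L \<and> path A c)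
          then Commit (SOME L. \<exists>c. author L = fst s \<and> rnd L = snd s \<and> is_cert f w c L \<and> path A c)
          else Skip)" by blast
        have nex: "\<not> (\<exists>L c. author L = fst s \<and> rnd L = snd s \<and> is_cert f w c L \<and> path A c)"
          using e Skip by (auto split: if_splits)
        have A: "A \<in> D u'" "rnd A = snd anc" using commit_in[OF u(2) an] by auto
        have "snd s + w \<le> snd anc" using later_slots_round find_in[OF fd] by blast
        then have "rnd L1 + w \<le> rnd A" using A aL1 by simp
        moreover have "2*f+1 \<le> card (author ` {c \<in> D u. is_cert f w c L1})"
          using dcL1 unfolding direct_commit_def by blast
        ultimately obtain c where "is_cert f w c L1" "path A c"
          using reach'[OF u _ A(1)] by blast
        then show False using nex aL1 by blast
      qed
    qed
    then show ?thesis ..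
  qed
qed

lemma agree_main:
  assumes u: "u \<in> H" "u' \<in> H"
  shows "decided (cls f w leaders (D u) k1 s) \<Longrightarrow> decided (cls f w leaders (D u') k2 s) \<Longrightarrow>
    agree (cls f w leaders (D u) k1 s) (cls f w leaders (D u') k2 s)"
proof (induction k1 arbitrary: k2 s)
  case 0 then show ?case by (simp add: decided_def)
next
  case (Suc k1)
  note IH = Suc(1)
  obtain k2' where k2: "k2 = Suc k2'" using Suc(3) by (cases k2) (auto simp: decided_def)
  show ?case
  proof (cases "direct_skip f w (D u) s \<or> (\<exists>L. direct_commit f w (D u) s L)")
    case True
    show ?thesis unfolding k2 by (rule one_direct[OF u True Suc(3)[unfolded k2]])
  next
    case nd1: False
    show ?thesis
    proof (cases "direct_skip f w (D u') s \<or> (\<exists>L. direct_commit f w (D u') s L)")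
      case True
      show ?thesis unfolding k2 by (rule agree_sym, rule one_direct[OF u(2,1) True Suc(2)])
    next
      case nd2: False
      from nd1 have n1: "\<not> direct_skip f w (D u) s" "\<not> (\<exists>L. direct_commit f w (D u) s L)" by auto
      from nd2 have n2: "\<not> direct_skip f w (D u') s" "\<not> (\<exists>L. direct_commit f w (D u') s L)" by auto
      from indirect_cases[OF n1 Suc(2)] obtain anc1 A1 where
          fd1: "find (\<lambda>s'. cls f w leaders (D u) k1 s' \<noteq> Skip) (later_slots leaders w (D u) s) = Some anc1"
          and an1: "cls f w leaders (D u) k1 anc1 = Commit A1" and
          e1: "cls f w leaders (D u) (Suc k1) s =
         (if (\<exists>L c. author L = fst s \<and> rnd L = snd s \<and> is_cert f w c L \<and> path A1 c)
          then Commit (SOME L. \<exists>c. author L = fst s \<and> rnd L = snd s \<and> is_cert f w c L \<and> path A1 c)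
          else Skip)" by blast
      from indirect_cases[OF n2 Suc(3)[unfolded k2]] obtain anc2 A2 where
          fd2: "find (\<lambda>s'. cls f w leaders (D u') k2' s' \<noteq> Skip) (later_slots leaders w (D u') s) = Some anc2"
          and an2: "cls f w leaders (D u') k2' anc2 = Commit A2" and
          e2: "cls f w leaders (D u') (Suc k2') s =
         (if (\<exists>L c. author L = fst s \<and> rnd L = snd s \<and> is_cert f w c L \<and> path A2 c)
          then Commit (SOME L. \<exists>c. author L = fst s \<and> rnd L = snd s \<and> is_cert f w c L \<and> path A2 c)
          else Skip)" by blast
      obtain zs where pre: "later_slots leaders w (D u') s = later_slots leaders w (D u) s @ zs \<or>
          later_slots leaders w (D u) s = later_slots leaders w (D u') s @ zs"
        using later_slots_prefix by blast
      have "anc1 = anc2 \<or> cls f w leaders (D u') k2' anc1 = Skip \<or> cls f w leaders (D u) k1 anc2 = Skip"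
      proof (cases "later_slots leaders w (D u') s = later_slots leaders w (D u) s @ zs")
        case True
        show ?thesis using find_prefix[OF fd1 fd2[unfolded True]] by blast
      next
        case False
        then have eq: "later_slots leaders w (D u) s = later_slots leaders w (D u') s @ zs" using pre by blast
        show ?thesis using find_prefix[OF fd2 fd1[unfolded eq]] by auto
      qed
      moreover have "cls f w leaders (D u') k2' anc1 \<noteq> Skip"
      proof
        assume sk: "cls f w leaders (D u') k2' anc1 = Skip"
        have "agree (cls f w leaders (D u) k1 anc1) (cls f w leaders (D u') k2' anc1)"
          by (rule IH) (simp_all add: an1 sk decided_def)
        then show False using an1 sk by (simp add: agree_def)
      qed
      moreover have "cls f w leaders (D u) k1 anc2 \<noteq> Skip"
      proof
        assume sk: "cls f w leaders (D u) k1 anc2 = Skip"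
        have "agree (cls f w leaders (D u) k1 anc2) (cls f w leaders (D u') k2' anc2)"
          by (rule IH) (simp_all add: an2 sk decided_def)
        then show False using an2 sk by (simp add: agree_def)
      qed
      ultimately have same: "anc1 = anc2" by blast
      have "agree (cls f w leaders (D u) k1 anc1) (cls f w leaders (D u') k2' anc1)"
        by (rule IH) (simp_all add: an1 an2[folded same] decided_def)
      then have "A1 = A2" using an1 an2[folded same] by (simp add: agree_def)
      then have "cls f w leaders (D u) (Suc k1) s = cls f w leaders (D u') k2 s"
        by (simp only: k2 e1 e2 \<open>A1 = A2\<close>)
      then show ?thesis using agree_refl[OF Suc(2)] by simp
    qed
  qed
qed

end


theorem lemma6:
  fixes n f w :: nat and leaders :: "nat \<Rightarrow> nat list" and H :: "nat set"
    and D :: "nat \<Rightarrow> block set" and v v' a r :: nat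
  assumes n_def: "n = 3 * f + 1"
    and wave: "w \<in> {4, 5}"
    and honest_validators: "H \<subseteq> {..<n}"
    and byz_bound: "card ({..<n} - H) \<le> f"
    and coin: "\<forall>r'. distinct (leaders r') \<and> set (leaders r') \<subseteq> {..<n}"
    and local_dags: "\<forall>u\<in>H. finite (D u) \<and>
                       (\<forall>b\<in>D u. valid n f b \<and> set (parents b) \<subseteq> D u)"
    and honest_unique: "\<forall>b\<in>(\<Union>u\<in>H. D u). \<forall>b'\<in>(\<Union>u\<in>H. D u).
                          author b \<in> H \<and> author b' = author b \<and> rnd b' = rnd b \<longrightarrow> b = b'"
    and v_honest: "v \<in> H" and v'_honest: "v' \<in> H"
    and slot: "a \<in> set (leaders r)"
    and dec_v: "decided (classify f w leaders (D v) (a, r))"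
    and dec_v': "decided (classify f w leaders (D v') (a, r))"
  shows "(\<exists>L. classify f w leaders (D v) (a, r) = Commit L \<and>
              classify f w leaders (D v') (a, r) = Commit L)
         \<or> (classify f w leaders (D v) (a, r) = Skip \<and>
            classify f w leaders (D v') (a, r) = Skip)"
proof -
  interpret setting n f w H D
    by unfold_locales (use n_def wave honest_validators byz_bound local_dags honest_unique in auto)
  have "agree (classify f w leaders (D v) (a, r)) (classify f w leaders (D v') (a, r))"
    using dec_v dec_v' unfolding classify_def by (rule agree_main[OF v_honest v'_honest])
  then show ?thesis unfolding agree_def .
qed

end
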